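(* Let $I$ be a group, $f:I\to G$ a group epimorphism with kernel $K$, and $\varphi:I\to\mathbb R^m$ a surjective quasimorphism such that (i) $\varphi(uv)=\varphi(u)+\varphi(v)$ for all $u\in K$, $v\in I$, and (ii) $A:=\varphi(K)\subset\mathbb Z^m$. Suppose $C_\varphi+D_\varphi>0$. Then (1) $cl(w)\ge\dfrac{\theta_w+D_\varphi}{C_\varphi+D_\varphi}$ for every $w\in G$, $w\ne e$; (2) if $G\ne\{e\}$, then $cld\,G\ge\dfrac{\theta_\varphi+D_\varphi}{C_\varphi+D_\varphi}$.
   Context: $\mathbb R^m$ carries the norm $\|x\|=\max_i|x_i|$. A map $\varphi:I\to\mathbb R^m$ is a quasimorphism if its defect $D_\varphi:=\sup_{a,b\in I}\|\varphi(ab)-\varphi(a)-\varphi(b)\|$ is finite. $C_\varphi:=\sup\{\|\varphi([a,b])\|: a,b\in I\}$. Under (i), $A$ is a subgroup of $\mathbb Z^m$ and there is a well-defined surjective map $\widehat\varphi:G\to\mathbb R^m/A$, $\widehat\varphi(w)=\varphi(v)+A$ for any $v\in f^{-1}(w)$. For $w\in G$, $\theta_w:=\min\{\|y\|: y\in\widehat\varphi(w)\}$ (a minimum over an affine lattice), and $\theta_\varphi:=\sup_{w\in G}\theta_w$. $cl$ is the commutator length in $G$ ($\infty$ outside $[G,G]$) and $cld\,G=\sup cl(G)$. *)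

theory Defs
  imports "HOL-Analysis.Analysis" "HOL-Algebra.Algebra" "HOL-Library.Extended_Real"
begin

definition maxnorm :: "real^'m::finite \<Rightarrow> real" where
  "maxnorm x = Max (range (\<lambda>i. \<bar>x $ i\<bar>))"

definition gcomm :: "('a, 'b) monoid_scheme \<Rightarrow> 'a \<Rightarrow> 'a \<Rightarrow> 'a" where
  "gcomm G a b = a \<otimes>\<^bsub>G\<^esub> b \<otimes>\<^bsub>G\<^esub> inv\<^bsub>G\<^esub> a \<otimes>\<^bsub>G\<^esub> inv\<^bsub>G\<^esub> b"

definition defect :: "('a, 'b) monoid_scheme \<Rightarrow> ('a \<Rightarrow> real^'m::finite) \<Rightarrow> real" where
  "defect I \<phi> = Sup {maxnorm (\<phi> (a \<otimes>\<^bsub>I\<^esub> b) - \<phi> a - \<phi> b) | a b. a \<in> carrier I \<and> b \<in> carrier I}"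

definition quasimorphism :: "('a, 'b) monoid_scheme \<Rightarrow> ('a \<Rightarrow> real^'m::finite) \<Rightarrow> bool" where
  "quasimorphism I \<phi> \<longleftrightarrow>
     bdd_above {maxnorm (\<phi> (a \<otimes>\<^bsub>I\<^esub> b) - \<phi> a - \<phi> b) | a b. a \<in> carrier I \<and> b \<in> carrier I}"

definition commbound :: "('a, 'b) monoid_scheme \<Rightarrow> ('a \<Rightarrow> real^'m::finite) \<Rightarrow> real" where
  "commbound I \<phi> = Sup {maxnorm (\<phi> (gcomm I a b)) | a b. a \<in> carrier I \<and> b \<in> carrier I}"

text \<open>hat phi (w) = phi(v) + A for v in f^-1(w); rendered as the union over all such v
  (under hypothesis (i) all these cosets coincide).\<close>
definition phihat :: "('a, 'b) monoid_scheme \<Rightarrow> ('c, 'd) monoid_scheme \<Rightarrow> ('a \<Rightarrow> 'c)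
    \<Rightarrow> ('a \<Rightarrow> real^'m::finite) \<Rightarrow> 'c \<Rightarrow> (real^'m) set" where
  "phihat I G f \<phi> w = {\<phi> v + a | v a. v \<in> carrier I \<and> f v = w \<and> a \<in> \<phi> ` kernel I G f}"

definition theta :: "('a, 'b) monoid_scheme \<Rightarrow> ('c, 'd) monoid_scheme \<Rightarrow> ('a \<Rightarrow> 'c)
    \<Rightarrow> ('a \<Rightarrow> real^'m::finite) \<Rightarrow> 'c \<Rightarrow> real" where
  "theta I G f \<phi> w = Inf (maxnorm ` phihat I G f \<phi> w)"

definition theta_sup :: "('a, 'b) monoid_scheme \<Rightarrow> ('c, 'd) monoid_scheme \<Rightarrow> ('a \<Rightarrow> 'c)
    \<Rightarrow> ('a \<Rightarrow> real^'m::finite) \<Rightarrow> ereal" where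
  "theta_sup I G f \<phi> = (SUP w\<in>carrier G. ereal (theta I G f \<phi> w))"

text \<open>Commutator length (infinity if w is not a product of commutators).\<close>
definition cl :: "('c, 'd) monoid_scheme \<Rightarrow> 'c \<Rightarrow> enat" where
  "cl G w = Inf {enat n | n. \<exists>xs ys. length xs = n \<and> length ys = n \<and>
      set xs \<subseteq> carrier G \<and> set ys \<subseteq> carrier G \<and>
      w = foldr (\<otimes>\<^bsub>G\<^esub>) (map2 (gcomm G) xs ys) \<one>\<^bsub>G\<^esub>}"

definition cld :: "('c, 'd) monoid_scheme \<Rightarrow> enat" where
  "cld G = (SUP w\<in>carrier G. cl G w)"

end

theory Submission
  imports Defs
begin


lemma maxnorm_ge: "\<bar>x $ i\<bar> \<le> maxnorm x"
  unfolding maxnorm_def by (rule Max_ge) auto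

lemma maxnorm_le: "(\<And>i. \<bar>x $ i\<bar> \<le> c) \<Longrightarrow> maxnorm x \<le> c"
  unfolding maxnorm_def by (subst Max_le_iff) auto

lemma maxnorm_nonneg: "0 \<le> maxnorm x"
  using maxnorm_ge[of x undefined] by linarith

lemma maxnorm_triangle: "maxnorm (x + y) \<le> maxnorm x + maxnorm y"
proof (rule maxnorm_le)
  fix i
  have "\<bar>(x+y) $ i\<bar> \<le> \<bar>x $ i\<bar> + \<bar>y $ i\<bar>" by simp
  also have "\<dots> \<le> maxnorm x + maxnorm y" using maxnorm_ge[of x i] maxnorm_ge[of y i] by linarith
  finally show "\<bar>(x+y) $ i\<bar> \<le> maxnorm x + maxnorm y" .
qed

lemma maxnorm_uminus: "maxnorm (- x) = maxnorm x"
  unfolding maxnorm_def by simp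

lemma maxnorm_zero: "maxnorm (0::real^'m::finite) = 0"
proof -
  have "maxnorm (0::real^'m) \<le> 0" by (rule maxnorm_le) simp
  then show ?thesis by (rule antisym[OF _ maxnorm_nonneg])
qed

lemma maxnorm_diff: "maxnorm (x - y) \<le> maxnorm x + maxnorm y"
  using maxnorm_triangle[of x "-y"] maxnorm_uminus[of y] by simp

lemma maxnorm_3: "maxnorm (x + y + z) \<le> maxnorm x + maxnorm y + maxnorm z"
  using maxnorm_triangle[of "x+y" z] maxnorm_triangle[of x y] by linarith

lemma maxnorm_5: "maxnorm (p + q + r + - s + - t) \<le> maxnorm p + maxnorm q + maxnorm r + maxnorm s + maxnorm t"
proof -
  have "maxnorm (p + q + r + - s + - t) \<le> maxnorm (p + q + r + - s) + maxnorm t"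
    using maxnorm_triangle[of "p + q + r + - s" "-t"] maxnorm_uminus[of t] by simp
  moreover have "maxnorm (p + q + r + - s) \<le> maxnorm (p + q + r) + maxnorm s"
    using maxnorm_triangle[of "p + q + r" "-s"] maxnorm_uminus[of s] by simp
  ultimately show ?thesis using maxnorm_3[of p q r] by linarith
qed

lemma defect_bound:
  assumes "quasimorphism I \<phi>" "a \<in> carrier I" "b \<in> carrier I"
  shows "maxnorm (\<phi> (a \<otimes>\<^bsub>I\<^esub> b) - \<phi> a - \<phi> b) \<le> defect I \<phi>"
  unfolding defect_def
  by (rule cSup_upper) (use assms in \<open>auto simp: quasimorphism_def\<close>)

lemma enat_Inf_attained:
  assumes "Inf S = enat n" shows "enat n \<in> S"
proof -
  have "S \<noteq> {}" using assms by (auto simp: Inf_enat_def)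
  then have "(LEAST x. x \<in> S) \<in> S" by (metis LeastI_ex ex_in_conv)
  then show ?thesis using assms \<open>S \<noteq> {}\<close> by (simp add: Inf_enat_def)
qed

lemma cl_witness:
  assumes "cl G w = enat n"
  shows "\<exists>xs ys. length xs = n \<and> length ys = n \<and>
      set xs \<subseteq> carrier G \<and> set ys \<subseteq> carrier G \<and>
      w = foldr (\<otimes>\<^bsub>G\<^esub>) (map2 (gcomm G) xs ys) \<one>\<^bsub>G\<^esub>"
  using enat_Inf_attained[OF assms[unfolded cl_def]] by auto



lemma phi_one:
  fixes \<phi> :: "'a \<Rightarrow> real^'m::finite"
  assumes "group I" "group G" "f \<in> hom I G"
    and "\<forall>u\<in>kernel I G f. \<forall>v\<in>carrier I. \<phi> (u \<otimes>\<^bsub>I\<^esub> v) = \<phi> u + \<phi> v"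
  shows "\<phi> \<one>\<^bsub>I\<^esub> = 0"
proof -
  interpret gh: group_hom I G f using assms by (simp add: group_hom_def group_hom_axioms_def)
  have c: "\<one>\<^bsub>I\<^esub> \<in> carrier I" by simp
  have k: "\<one>\<^bsub>I\<^esub> \<in> kernel I G f" by (simp add: kernel_def)
  have h: "\<phi> (\<one>\<^bsub>I\<^esub> \<otimes>\<^bsub>I\<^esub> \<one>\<^bsub>I\<^esub>) = \<phi> \<one>\<^bsub>I\<^esub> + \<phi> \<one>\<^bsub>I\<^esub>"
    using bspec[OF bspec[OF assms(4) k] c] .
  have eq: "\<one>\<^bsub>I\<^esub> \<otimes>\<^bsub>I\<^esub> \<one>\<^bsub>I\<^esub> = \<one>\<^bsub>I\<^esub>" by simp
  from h have h2: "\<phi> \<one>\<^bsub>I\<^esub> = \<phi> \<one>\<^bsub>I\<^esub> + \<phi> \<one>\<^bsub>I\<^esub>" by (simp only: eq)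
  have "\<phi> \<one>\<^bsub>I\<^esub> + 0 = \<phi> \<one>\<^bsub>I\<^esub>" by (rule add_0_right)
  also have "\<dots> = \<phi> \<one>\<^bsub>I\<^esub> + \<phi> \<one>\<^bsub>I\<^esub>" by (rule h2)
  finally have "(0::real^'m) = \<phi> \<one>\<^bsub>I\<^esub>" by (simp only: add_left_cancel)
  then show ?thesis by (rule sym)
qed

lemma comm_bound:
  assumes "group I" "quasimorphism I \<phi>" "\<phi> \<one>\<^bsub>I\<^esub> = 0"
    and a: "a \<in> carrier I" and b: "b \<in> carrier I"
  shows "maxnorm (\<phi> (gcomm I a b)) \<le> 5 * defect I \<phi>"
proof -
  define e where "e x y = \<phi> (x \<otimes>\<^bsub>I\<^esub> y) - \<phi> x - \<phi> y" for x y
  have eb: "maxnorm (e x y) \<le> defect I \<phi>" if "x \<in> carrier I" "y \<in> carrier I" for x y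
    unfolding e_def using defect_bound[OF assms(2) that] .
  have one: "\<phi> (x \<otimes>\<^bsub>I\<^esub> y) = e x y + \<phi> x + \<phi> y" for x y by (simp add: e_def)
  have ia: "inv\<^bsub>I\<^esub> a \<in> carrier I" and ib: "inv\<^bsub>I\<^esub> b \<in> carrier I"
    by (rule group.inv_closed[OF assms(1) a], rule group.inv_closed[OF assms(1) b])
  have ab: "a \<otimes>\<^bsub>I\<^esub> b \<in> carrier I" by (rule monoid.m_closed[OF group.is_monoid[OF assms(1)] a b])
  have aba: "a \<otimes>\<^bsub>I\<^esub> b \<otimes>\<^bsub>I\<^esub> inv\<^bsub>I\<^esub> a \<in> carrier I"
    by (rule monoid.m_closed[OF group.is_monoid[OF assms(1)] ab ia])
  have ra: "a \<otimes>\<^bsub>I\<^esub> inv\<^bsub>I\<^esub> a = \<one>\<^bsub>I\<^esub>" by (rule group.r_inv[OF assms(1) a])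
  have rb: "b \<otimes>\<^bsub>I\<^esub> inv\<^bsub>I\<^esub> b = \<one>\<^bsub>I\<^esub>" by (rule group.r_inv[OF assms(1) b])
  have pa: "\<phi> a + \<phi> (inv\<^bsub>I\<^esub> a) = - e a (inv\<^bsub>I\<^esub> a)" using assms(3) ra by (simp add: e_def)
  have pb: "\<phi> b + \<phi> (inv\<^bsub>I\<^esub> b) = - e b (inv\<^bsub>I\<^esub> b)" using assms(3) rb by (simp add: e_def)
  have "\<phi> (gcomm I a b) = e (a \<otimes>\<^bsub>I\<^esub> b \<otimes>\<^bsub>I\<^esub> inv\<^bsub>I\<^esub> a) (inv\<^bsub>I\<^esub> b) + e (a \<otimes>\<^bsub>I\<^esub> b) (inv\<^bsub>I\<^esub> a) + e a b
       + (\<phi> a + \<phi> (inv\<^bsub>I\<^esub> a)) + (\<phi> b + \<phi> (inv\<^bsub>I\<^esub> b))"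
  proof -
    have s1: "\<phi> (gcomm I a b) = e (a \<otimes>\<^bsub>I\<^esub> b \<otimes>\<^bsub>I\<^esub> inv\<^bsub>I\<^esub> a) (inv\<^bsub>I\<^esub> b) + \<phi> (a \<otimes>\<^bsub>I\<^esub> b \<otimes>\<^bsub>I\<^esub> inv\<^bsub>I\<^esub> a) + \<phi> (inv\<^bsub>I\<^esub> b)"
      unfolding gcomm_def by (rule one)
    have s2: "\<phi> (a \<otimes>\<^bsub>I\<^esub> b \<otimes>\<^bsub>I\<^esub> inv\<^bsub>I\<^esub> a) = e (a \<otimes>\<^bsub>I\<^esub> b) (inv\<^bsub>I\<^esub> a) + \<phi> (a \<otimes>\<^bsub>I\<^esub> b) + \<phi> (inv\<^bsub>I\<^esub> a)"
      by (rule one)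
    have s3: "\<phi> (a \<otimes>\<^bsub>I\<^esub> b) = e a b + \<phi> a + \<phi> b" by (rule one)
    show ?thesis unfolding s1 s2 s3 by (simp only: add.assoc add.commute add.left_commute)
  qed
  then have eq: "\<phi> (gcomm I a b) = e (a \<otimes>\<^bsub>I\<^esub> b \<otimes>\<^bsub>I\<^esub> inv\<^bsub>I\<^esub> a) (inv\<^bsub>I\<^esub> b) + e (a \<otimes>\<^bsub>I\<^esub> b) (inv\<^bsub>I\<^esub> a) + e a b
       + - e a (inv\<^bsub>I\<^esub> a) + - e b (inv\<^bsub>I\<^esub> b)" unfolding pa pb .
  have "maxnorm (\<phi> (gcomm I a b)) \<le> maxnorm (e (a \<otimes>\<^bsub>I\<^esub> b \<otimes>\<^bsub>I\<^esub> inv\<^bsub>I\<^esub> a) (inv\<^bsub>I\<^esub> b)) + maxnorm (e (a \<otimes>\<^bsub>I\<^esub> b) (inv\<^bsub>I\<^esub> a))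
     + maxnorm (e a b) + maxnorm (e a (inv\<^bsub>I\<^esub> a)) + maxnorm (e b (inv\<^bsub>I\<^esub> b))"
    unfolding eq by (rule maxnorm_5)
  also have "\<dots> \<le> 5 * defect I \<phi>"
    using eb[OF aba ib] eb[OF ab ia] eb[OF a b] eb[OF a ia] eb[OF b ib] by linarith
  finally show ?thesis .
qed

lemma gcomm_hom:
  assumes "group I" "group G" "f \<in> hom I G" "a \<in> carrier I" "b \<in> carrier I"
  shows "f (gcomm I a b) = gcomm G (f a) (f b)"
proof -
  interpret gh: group_hom I G f using assms by (simp add: group_hom_def group_hom_axioms_def)
  show ?thesis unfolding gcomm_def using assms(4,5) by (simp add: gh.hom_inv)
qed

lemma lift_product:
  assumes "group I" "group G" "f \<in> hom I G" "f ` carrier I = carrier G"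
    and Cb: "\<forall>a\<in>carrier I. \<forall>b\<in>carrier I. maxnorm (\<phi> (gcomm I a b)) \<le> C"
    and Db: "\<forall>a\<in>carrier I. \<forall>b\<in>carrier I. maxnorm (\<phi> (a \<otimes>\<^bsub>I\<^esub> b) - \<phi> a - \<phi> b) \<le> D"
  shows "length xs = length ys \<Longrightarrow> set xs \<subseteq> carrier G \<Longrightarrow> set ys \<subseteq> carrier G \<Longrightarrow>
    \<exists>v\<in>carrier I. f v = foldr (\<otimes>\<^bsub>G\<^esub>) (map2 (gcomm G) xs ys) \<one>\<^bsub>G\<^esub> \<and>
      (xs \<noteq> [] \<longrightarrow> maxnorm (\<phi> v) \<le> real (length xs) * C + (real (length xs) - 1) * D)"
proof (induction xs ys rule: list_induct2)
  case Nil
  interpret gh: group_hom I G f using assms by (simp add: group_hom_def group_hom_axioms_def)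
  show ?case by (intro bexI[of _ "\<one>\<^bsub>I\<^esub>"]) auto
next
  case (Cons x xs y ys)
  interpret gh: group_hom I G f using assms by (simp add: group_hom_def group_hom_axioms_def)
  interpret I: group I by fact
  interpret G: group G by fact
  from Cons.prems obtain a where a: "a \<in> carrier I" "f a = x" using assms(4) by (metis image_iff list.set_intros(1) subsetD)
  from Cons.prems obtain b where b: "b \<in> carrier I" "f b = y" using assms(4) by (metis image_iff list.set_intros(1) subsetD)
  from Cons obtain v where v: "v \<in> carrier I" "f v = foldr (\<otimes>\<^bsub>G\<^esub>) (map2 (gcomm G) xs ys) \<one>\<^bsub>G\<^esub>"
    "xs \<noteq> [] \<longrightarrow> maxnorm (\<phi> v) \<le> real (length xs) * C + (real (length xs) - 1) * D" by auto
  have c: "gcomm I a b \<in> carrier I" using a b unfolding gcomm_def by auto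
  have fc: "f (gcomm I a b) = gcomm G x y" using gcomm_hom[OF assms(1-3) a(1) b(1)] a b by simp
  have xyc: "gcomm G x y \<in> carrier G" using Cons.prems unfolding gcomm_def by auto
  show ?case
  proof (cases "xs = []")
    case True
    then have "ys = []" using Cons.hyps by simp
    then show ?thesis using True c fc xyc Cb a b by (intro bexI[of _ "gcomm I a b"]) auto
  next
    case False
    have "\<phi> (gcomm I a b \<otimes>\<^bsub>I\<^esub> v) = (\<phi> (gcomm I a b \<otimes>\<^bsub>I\<^esub> v) - \<phi> (gcomm I a b) - \<phi> v) + \<phi> (gcomm I a b) + \<phi> v"
      by simp
    then have "maxnorm (\<phi> (gcomm I a b \<otimes>\<^bsub>I\<^esub> v)) \<le> maxnorm (\<phi> (gcomm I a b \<otimes>\<^bsub>I\<^esub> v) - \<phi> (gcomm I a b) - \<phi> v)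
       + maxnorm (\<phi> (gcomm I a b)) + maxnorm (\<phi> v)"
      by (metis maxnorm_3)
    also have "\<dots> \<le> D + C + (real (length xs) * C + (real (length xs) - 1) * D)"
    proof -
      have "maxnorm (\<phi> (gcomm I a b \<otimes>\<^bsub>I\<^esub> v) - \<phi> (gcomm I a b) - \<phi> v) \<le> D" using Db c v(1) by blast
      moreover have "maxnorm (\<phi> (gcomm I a b)) \<le> C" using Cb a b by blast
      ultimately show ?thesis using v(3) False by linarith
    qed
    finally have bnd: "maxnorm (\<phi> (gcomm I a b \<otimes>\<^bsub>I\<^esub> v)) \<le> real (length (x#xs)) * C + (real (length (x#xs)) - 1) * D"
      by (simp add: algebra_simps)
    have "f (gcomm I a b \<otimes>\<^bsub>I\<^esub> v) = foldr (\<otimes>\<^bsub>G\<^esub>) (map2 (gcomm G) (x#xs) (y#ys)) \<one>\<^bsub>G\<^esub>"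
      using c v fc by simp
    then show ?thesis using bnd c v by (intro bexI[of _ "gcomm I a b \<otimes>\<^bsub>I\<^esub> v"]) auto
  qed
qed

lemma theta_le:
  assumes "group I" "group G" "f \<in> hom I G" "\<phi> \<one>\<^bsub>I\<^esub> = 0" "v \<in> carrier I" "f v = w"
  shows "theta I G f \<phi> w \<le> maxnorm (\<phi> v)"
proof -
  interpret gh: group_hom I G f using assms by (simp add: group_hom_def group_hom_axioms_def)
  have k: "\<one>\<^bsub>I\<^esub> \<in> kernel I G f" by (simp add: kernel_def)
  have "\<phi> v + \<phi> \<one>\<^bsub>I\<^esub> \<in> phihat I G f \<phi> w" unfolding phihat_def using assms(5,6) k by blast
  then have "maxnorm (\<phi> v) \<in> maxnorm ` phihat I G f \<phi> w" using assms(4) by (metis add_0_right image_eqI)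
  then show ?thesis unfolding theta_def
    by (rule cInf_lower) (meson bdd_belowI2 maxnorm_nonneg)
qed

theorem proposition2:
  fixes I :: "('a, 'b) monoid_scheme" and G :: "('c, 'd) monoid_scheme"
    and f :: "'a \<Rightarrow> 'c" and \<phi> :: "'a \<Rightarrow> real^'m::finite"
  assumes "group I" and "group G"
    and "f \<in> epi I G"
    and "quasimorphism I \<phi>"
    and "\<phi> ` carrier I = UNIV"
    and "\<forall>u\<in>kernel I G f. \<forall>v\<in>carrier I. \<phi> (u \<otimes>\<^bsub>I\<^esub> v) = \<phi> u + \<phi> v"
    and "\<forall>u\<in>kernel I G f. \<forall>i. \<phi> u $ i \<in> \<int>"
    and "commbound I \<phi> + defect I \<phi> > 0"
  shows "(\<forall>w\<in>carrier G. w \<noteq> \<one>\<^bsub>G\<^esub> \<longrightarrow>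
           ereal ((theta I G f \<phi> w + defect I \<phi>) / (commbound I \<phi> + defect I \<phi>))
             \<le> ereal_of_enat (cl G w))
       \<and> (carrier G \<noteq> {\<one>\<^bsub>G\<^esub>} \<longrightarrow>
           (theta_sup I G f \<phi> + ereal (defect I \<phi>)) / ereal (commbound I \<phi> + defect I \<phi>)
             \<le> ereal_of_enat (cld G))"
proof -
  define C where "C = commbound I \<phi>"
  define D where "D = defect I \<phi>"
  interpret I: group I by fact
  interpret G: group G by fact
  have hom: "f \<in> hom I G" and surj: "f ` carrier I = carrier G" using assms(3) by (auto simp: epi_def)
  interpret gh: group_hom I G f using assms(1,2) hom by (simp add: group_hom_def group_hom_axioms_def)
  have p1: "\<phi> \<one>\<^bsub>I\<^esub> = 0" using phi_one[OF assms(1,2) hom assms(6)] .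
  have Db: "\<forall>a\<in>carrier I. \<forall>b\<in>carrier I. maxnorm (\<phi> (a \<otimes>\<^bsub>I\<^esub> b) - \<phi> a - \<phi> b) \<le> D"
    unfolding D_def using defect_bound[OF assms(4)] by blast
  have bdd: "bdd_above {maxnorm (\<phi> (gcomm I a b)) | a b. a \<in> carrier I \<and> b \<in> carrier I}"
    by (rule bdd_aboveI[where M="5 * defect I \<phi>"]) (use comm_bound[OF assms(1,4) p1] in auto)
  have Cb: "\<forall>a\<in>carrier I. \<forall>b\<in>carrier I. maxnorm (\<phi> (gcomm I a b)) \<le> C"
    unfolding C_def commbound_def by (blast intro: cSup_upper[OF _ bdd])
  have "maxnorm (\<phi> (gcomm I \<one>\<^bsub>I\<^esub> \<one>\<^bsub>I\<^esub>)) \<le> C" using Cb I.one_closed by blast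
  then have C0: "0 \<le> C" using maxnorm_nonneg[of "\<phi> (gcomm I \<one>\<^bsub>I\<^esub> \<one>\<^bsub>I\<^esub>)"] by linarith
  have CD: "C + D > 0" using assms(8) unfolding C_def D_def .
  have key: "1 \<le> n \<and> theta I G f \<phi> w + D \<le> real n * (C + D)"
    if w: "w \<in> carrier G" "w \<noteq> \<one>\<^bsub>G\<^esub>" and cw: "cl G w = enat n" for w n
  proof -
    obtain xs ys where xy: "length xs = n" "length ys = n" "set xs \<subseteq> carrier G" "set ys \<subseteq> carrier G"
      "w = foldr (\<otimes>\<^bsub>G\<^esub>) (map2 (gcomm G) xs ys) \<one>\<^bsub>G\<^esub>"
      using cl_witness[OF cw] by blast
    have n1: "n \<noteq> 0" using xy w by auto
    then have ne: "xs \<noteq> []" using xy by auto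
    obtain v where v: "v \<in> carrier I" "f v = w" "maxnorm (\<phi> v) \<le> real n * C + (real n - 1) * D"
      using lift_product[OF assms(1,2) hom surj Cb Db, of xs ys] xy ne by auto
    have "theta I G f \<phi> w \<le> maxnorm (\<phi> v)" using theta_le[where \<phi>=\<phi> and f=f, OF assms(1,2) hom p1 v(1,2)] .
    then show ?thesis using v(3) n1 by (simp add: algebra_simps)
  qed
  have part1: "\<forall>w\<in>carrier G. w \<noteq> \<one>\<^bsub>G\<^esub> \<longrightarrow>
           ereal ((theta I G f \<phi> w + D) / (C + D)) \<le> ereal_of_enat (cl G w)"
  proof (intro ballI impI)
    fix w assume w: "w \<in> carrier G" "w \<noteq> \<one>\<^bsub>G\<^esub>"
    show "ereal ((theta I G f \<phi> w + D) / (C + D)) \<le> ereal_of_enat (cl G w)"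
    proof (cases "cl G w")
      case (enat n)
      have "(theta I G f \<phi> w + D) / (C + D) \<le> real n"
        using key[OF w enat] CD by (simp add: divide_le_eq)
      then show ?thesis using enat by simp
    qed simp
  qed
  have part2: "carrier G \<noteq> {\<one>\<^bsub>G\<^esub>} \<longrightarrow>
           (theta_sup I G f \<phi> + ereal D) / ereal (C + D) \<le> ereal_of_enat (cld G)"
  proof
    assume nt: "carrier G \<noteq> {\<one>\<^bsub>G\<^esub>}"
    then obtain w0 where w0: "w0 \<in> carrier G" "w0 \<noteq> \<one>\<^bsub>G\<^esub>" by blast
    show "(theta_sup I G f \<phi> + ereal D) / ereal (C + D) \<le> ereal_of_enat (cld G)"
    proof (cases "cld G")
      case (enat N)
      have clle: "cl G w \<le> enat N" if "w \<in> carrier G" for w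
        using that enat unfolding cld_def by (metis SUP_upper)
      have N1: "1 \<le> N"
      proof (cases "cl G w0")
        case (enat n0)
        then show ?thesis using key[OF w0 enat] clle[OF w0(1)] by simp
      next
        case infinity then show ?thesis using clle[OF w0(1)] by simp
      qed
      have bound: "theta I G f \<phi> w \<le> real N * (C + D) - D" if w: "w \<in> carrier G" for w
      proof (cases "w = \<one>\<^bsub>G\<^esub>")
        case True
        have "theta I G f \<phi> w \<le> maxnorm (\<phi> \<one>\<^bsub>I\<^esub>)"
          using theta_le[where \<phi>=\<phi> and f=f and v="\<one>\<^bsub>I\<^esub>" and w=w, OF assms(1,2) hom p1] True by simp
        then have "theta I G f \<phi> w \<le> 0" using p1 maxnorm_zero[where 'm='m] by simp
        moreover have "1 * (C + D) \<le> real N * (C + D)" using N1 CD by (intro mult_right_mono) auto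
        ultimately show ?thesis using C0 by simp
      next
        case False
        show ?thesis
        proof (cases "cl G w")
          case (enat n)
          have "n \<le> N" using clle[OF w] enat by simp
          then have "real n * (C + D) \<le> real N * (C + D)" using CD by (intro mult_right_mono) auto
          then show ?thesis using key[OF w False enat] by simp
        next
          case infinity then show ?thesis using clle[OF w] by simp
        qed
      qed
      have ts: "theta_sup I G f \<phi> \<le> ereal (real N * (C + D) - D)"
        unfolding theta_sup_def by (rule SUP_least) (use bound in simp)
      show ?thesis
      proof (cases "theta_sup I G f \<phi>")
        case (real t)
        have "(t + D) / (C + D) \<le> real N" using ts real CD by (simp add: divide_le_eq)
        then show ?thesis using real enat CD by simp
      next
        case PInf then show ?thesis using ts by simp
      next
        case MInf then show ?thesis using CD enat by simp
      qed
    qed simp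
  qed
  show ?thesis using part1 part2 unfolding C_def D_def by blast
qed

end
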